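(* There is no binary self-orthogonal $[110,7,54]$ code.
   Context: A binary linear code $C$ is self-orthogonal if $C\subseteq C^\perp$. *)

theory Defs
  imports "HOL-Analysis.Analysis" "HOL-Library.Z2" "HOL-Library.Numeral_Type"
begin

definition bscale :: "bit \<Rightarrow> bit ^ 'n \<Rightarrow> bit ^ 'n" where
  "bscale a v = (\<chi> i. a * v $ i)"

lemma vector_space_bscale: "vector_space bscale"
  by unfold_locales (auto simp: bscale_def vec_eq_iff algebra_simps)

definition binary_linear_code :: "(bit ^ 'n) set \<Rightarrow> bool" where
  "binary_linear_code C \<longleftrightarrow> module.subspace bscale C"

definition code_dim :: "(bit ^ 'n) set \<Rightarrow> nat" where
  "code_dim C = vector_space.dim bscale C"

definition hamming_weight :: "bit ^ 'n \<Rightarrow> nat" where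
  "hamming_weight v = card {i. v $ i \<noteq> 0}"

definition hamming_dist :: "bit ^ 'n \<Rightarrow> bit ^ 'n \<Rightarrow> nat" where
  "hamming_dist x y = card {i. x $ i \<noteq> y $ i}"

text \<open>Minimum distance of a code (with at least two codewords).\<close>
definition min_dist :: "(bit ^ 'n) set \<Rightarrow> nat" where
  "min_dist C = Min {hamming_dist x y | x y. x \<in> C \<and> y \<in> C \<and> x \<noteq> y}"

definition bdot :: "bit ^ 'n \<Rightarrow> bit ^ 'n \<Rightarrow> bit" where
  "bdot x y = (\<Sum>i\<in>UNIV. x $ i * y $ i)"

definition dual_code :: "(bit ^ 'n) set \<Rightarrow> (bit ^ 'n) set" where
  "dual_code C = {y. \<forall>x\<in>C. bdot x y = 0}"

definition self_orthogonal :: "(bit ^ 'n) set \<Rightarrow> bool" where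
  "self_orthogonal C \<longleftrightarrow> C \<subseteq> dual_code C"

definition is_nkd_code :: "(bit ^ 'n) set \<Rightarrow> nat \<Rightarrow> nat \<Rightarrow> bool" where
  "is_nkd_code C k d \<longleftrightarrow> binary_linear_code C \<and> code_dim C = k \<and> min_dist C = d"

end

theory Submission
  imports Defs
begin

lemma vec_add_self [simp]: "(x :: bit ^ 'n) + x = 0"
  by (simp add: vec_eq_iff)

lemma bit_of_nat: "(of_nat n :: bit) = (if even n then 0 else 1)"
proof (induction n)
  case (Suc n)
  have "(of_nat (Suc n) :: bit) = 1 + of_nat n" by simp
  then show ?case using Suc by (cases "even n") auto
qed simp

lemma bit_add_self [simp]: "(a::bit) + a = 0"
  by (cases a) (auto simp flip: one_add_one)

definition supp :: "bit ^ 'n \<Rightarrow> 'n set" where "supp x = {i. x $ i \<noteq> 0}"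

lemma wt_supp: "hamming_weight x = card (supp x)"
  by (simp add: hamming_weight_def supp_def)

lemma supp_add: "supp (x + y) = (supp x \<union> supp y) - (supp x \<inter> supp y)"
  by (auto simp: supp_def)

lemma wt_add: "hamming_weight (x + y) + 2 * card (supp x \<inter> supp y) = hamming_weight x + hamming_weight y"
proof -
  have f: "finite (supp x)" "finite (supp y)" by auto
  have "card (supp x \<union> supp y) + card (supp x \<inter> supp y) = card (supp x) + card (supp y)"
    using card_Un_Int[OF f] by simp
  moreover have "card ((supp x \<union> supp y) - (supp x \<inter> supp y)) = card (supp x \<union> supp y) - card (supp x \<inter> supp y)"
    by (rule card_Diff_subset) auto
  moreover have "card (supp x \<inter> supp y) \<le> card (supp x \<union> supp y)" by (rule card_mono) auto
  ultimately show ?thesis by (simp add: wt_supp supp_add)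
qed

lemma bdot_card: "bdot x y = of_nat (card (supp x \<inter> supp y))"
proof -
  have "bdot x y = (\<Sum>i\<in>UNIV. if i \<in> supp x \<inter> supp y then 1 else 0)"
    unfolding bdot_def supp_def
    apply (rule sum.cong, simp)
    subgoal for i by (cases "x $ i"; cases "y $ i") auto
    done
  also have "\<dots> = of_nat (card (supp x \<inter> supp y))"
    by (simp add: sum.If_cases Collect_conj_eq)
  finally show ?thesis .
qed

lemma bdot_zero_even: "bdot x y = 0 \<Longrightarrow> even (card (supp x \<inter> supp y))"
  by (simp add: bdot_card bit_of_nat split: if_splits)

lemma UNIV_bit: "(UNIV :: bit set) = {0, 1}"
  using bit_not_zero_iff by blast

instance bit :: finite
  by standard (simp add: UNIV_bit)

interpretation bv: vector_space bscale by (rule vector_space_bscale)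

lemma bscale_01 [simp]: "bscale 1 v = v" "bscale 0 v = 0"
  by (simp_all add: bscale_def vec_eq_iff)

lemma sum_symdiff_zero:
  fixes S T :: "(bit ^ 'n) set"
  assumes "finite S" "finite T" "sum id S = sum id T"
  shows "sum id ((S - T) \<union> (T - S)) = 0"
proof -
  have "sum id S = sum id (S - T) + sum id (S \<inter> T)"
    using assms by (metis add.commute sum.Int_Diff)
  moreover have "sum id T = sum id (T - S) + sum id (S \<inter> T)"
    using assms by (metis add.commute sum.Int_Diff Int_commute)
  ultimately have e: "sum id (S - T) = sum id (T - S)" using assms by simp
  have "sum id ((S - T) \<union> (T - S)) = sum id (S - T) + sum id (T - S)"
    by (rule sum.union_disjoint) (use assms in auto)
  also have "\<dots> = 0" using e by simp
  finally show ?thesis .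
qed

lemma card_subspace_ge:
  fixes C :: "(bit ^ 'n) set"
  assumes "bv.subspace C"
  shows "2 ^ bv.dim C \<le> card C"
proof -
  obtain B where B: "B \<subseteq> C" "bv.independent B" "C \<subseteq> bv.span B" "card B = bv.dim C"
    by (rule bv.basis_exists)
  have fB: "finite B" by simp
  have inj: "inj_on (sum id) (Pow B)"
  proof (rule inj_onI)
    fix S T assume S: "S \<in> Pow B" and T: "T \<in> Pow B" and eq: "sum id S = sum id T"
    have fS: "finite S" "finite T" by auto
    define D where "D = (S - T) \<union> (T - S)"
    have D0: "sum id D = 0" unfolding D_def by (rule sum_symdiff_zero[OF fS eq])
    define u where "u = (\<lambda>v. if v \<in> D then (1::bit) else 0)"
    have "(\<Sum>v\<in>B. bscale (u v) v) = (\<Sum>v\<in>B. if v \<in> D then v else 0)"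
      by (rule sum.cong) (auto simp: u_def)
    also have "\<dots> = sum id D"
    proof -
      have DB: "D \<subseteq> B" using S T by (auto simp: D_def)
      have "(\<Sum>v\<in>B. if v \<in> D then v else 0) = sum id {v \<in> B. v \<in> D}"
        using fB by (simp add: sum.inter_filter)
      also have "{v \<in> B. v \<in> D} = D" using DB by auto
      finally show ?thesis .
    qed
    finally have z: "(\<Sum>v\<in>B. bscale (u v) v) = 0" using D0 by simp
    show "S = T"
    proof (rule ccontr)
      assume "S \<noteq> T"
      then obtain v where v: "v \<in> D" unfolding D_def by blast
      have "v \<in> B" using v S T unfolding D_def by auto
      then have "u v = 0" using bv.independentD[OF B(2) fB order.refl z] by blast
      with v show False by (simp add: u_def)
    qed
  qed
  have img: "sum id ` Pow B \<subseteq> C"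
  proof
    fix x assume "x \<in> sum id ` Pow B"
    then obtain S where "S \<subseteq> B" "x = sum id S" by auto
    then show "x \<in> C" using B(1) assms by (auto intro!: bv.subspace_sum)
  qed
  have "card (Pow B) \<le> card C" by (rule card_inj_on_le[OF inj img]) simp
  then show ?thesis using B(4) card_Pow[OF fB] by simp
qed


lemma half_count:
  fixes C0 :: "(bit ^ 'n) set"
  assumes cl: "\<And>x y. x \<in> C0 \<Longrightarrow> y \<in> C0 \<Longrightarrow> x + y \<in> C0"
  shows "2 * card {c \<in> C0. c $ i \<noteq> 0} \<le> card C0"
proof (cases "{c \<in> C0. c $ i \<noteq> 0} = {}")
  case True then show ?thesis by (simp only: True card.empty)
next
  case False
  then obtain c' where c': "c' \<in> C0" "c' $ i = 1" by auto
  let ?A = "{c \<in> C0. c $ i \<noteq> 0}"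
  have inj: "inj_on (\<lambda>c. c + c') ?A" by (rule inj_onI) simp
  have img: "(\<lambda>c. c + c') ` ?A \<subseteq> C0 - ?A" using c' cl by auto
  have "card ?A \<le> card (C0 - ?A)" by (rule card_inj_on_le[OF inj img]) simp
  moreover have "card (C0 - ?A) = card C0 - card ?A" by (rule card_Diff_subset) auto
  moreover have "card ?A \<le> card C0" by (rule card_mono) auto
  ultimately show ?thesis by linarith
qed

lemma sum_wt_bound:
  fixes C0 :: "(bit ^ 'n) set"
  assumes cl: "\<And>x y. x \<in> C0 \<Longrightarrow> y \<in> C0 \<Longrightarrow> x + y \<in> C0"
  shows "2 * (\<Sum>c\<in>C0. hamming_weight c) \<le> CARD('n) * card C0"
proof -
  have "(\<Sum>c\<in>C0. hamming_weight c) = (\<Sum>c\<in>C0. \<Sum>i\<in>UNIV. if c $ i \<noteq> 0 then 1 else 0)"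
    by (rule sum.cong) (simp_all add: hamming_weight_def sum.If_cases)
  also have "\<dots> = (\<Sum>i\<in>UNIV. \<Sum>c\<in>C0. if c $ i \<noteq> 0 then 1 else 0)"
    by (rule sum.swap)
  also have "\<dots> = (\<Sum>i\<in>UNIV. card {c \<in> C0. c $ i \<noteq> 0})"
    by (rule sum.cong) (simp_all add: sum.If_cases Int_def)
  finally have e: "(\<Sum>c\<in>C0. hamming_weight c) = (\<Sum>i\<in>UNIV. card {c \<in> C0. c $ i \<noteq> 0})" .
  have "2 * (\<Sum>i\<in>(UNIV::'n set). card {c \<in> C0. c $ i \<noteq> 0}) = (\<Sum>i\<in>(UNIV::'n set). 2 * card {c \<in> C0. c $ i \<noteq> 0})"
    by (simp add: sum_distrib_left)
  also have "\<dots> \<le> (\<Sum>i\<in>(UNIV::'n set). card C0)"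
    by (rule sum_mono) (rule half_count[OF cl])
  also have "\<dots> = CARD('n) * card C0" by simp
  finally show ?thesis using e by simp
qed


lemma ar1: "4 dvd a \<Longrightarrow> 4 dvd b \<Longrightarrow> even k \<Longrightarrow> w + 2*k = a + b \<Longrightarrow> 4 dvd (w::nat)"
  by presburger
lemma ar2: "\<not> 4 dvd a \<Longrightarrow> \<not> 4 dvd b \<Longrightarrow> even a \<Longrightarrow> even b \<Longrightarrow> even k \<Longrightarrow> w + 2*k = a + b \<Longrightarrow> 4 dvd (w::nat)"
  by presburger
lemma ar3: "54 \<le> w \<Longrightarrow> 4 dvd w \<Longrightarrow> 56 \<le> (w::nat)"
  by presburger
lemma ar4: "56 * (N - 1) \<le> s \<Longrightarrow> 2 * s \<le> 110 * N \<Longrightarrow> 128 \<le> c \<Longrightarrow> c \<le> 2 * N \<Longrightarrow> False" for N s c :: nat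
  by linarith

lemma wt_ge_min:
  fixes C :: "(bit ^ 'n) set"
  assumes "min_dist C = d" "x \<in> C" "y \<in> C" "x \<noteq> y"
  shows "d \<le> hamming_dist x y"
proof -
  let ?S = "{hamming_dist x y | x y. x \<in> C \<and> y \<in> C \<and> x \<noteq> y}"
  have "?S \<subseteq> {..CARD('n)}"
  proof
    fix k assume "k \<in> ?S"
    then obtain a b :: "bit ^ 'n" where "k = hamming_dist a b" by blast
    moreover have "card {i. a $ i \<noteq> b $ i} \<le> card (UNIV :: 'n set)" by (rule card_mono) auto
    ultimately show "k \<in> {..CARD('n)}" by (simp add: hamming_dist_def)
  qed
  then have fin: "finite ?S" by (rule finite_subset) simp
  have mem: "hamming_dist x y \<in> ?S" using assms by blast
  have "Min ?S \<le> hamming_dist x y" by (rule Min_le[OF fin mem])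
  then show ?thesis using assms(1) unfolding min_dist_def by simp
qed

lemma dist0: "hamming_dist x 0 = hamming_weight x"
  by (simp add: hamming_dist_def hamming_weight_def)

theorem proposition6p5:
  shows "\<not> (\<exists>C :: (bit ^ 110) set. is_nkd_code C 7 54 \<and> self_orthogonal C)"
proof
  assume "\<exists>C :: (bit ^ 110) set. is_nkd_code C 7 54 \<and> self_orthogonal C"
  then obtain C :: "(bit ^ 110) set" where C: "is_nkd_code C 7 54" "self_orthogonal C" by blast
  have sub: "bv.subspace C" and dim: "bv.dim C = 7" and md: "min_dist C = 54"
    using C(1) by (auto simp: is_nkd_code_def binary_linear_code_def code_dim_def)
  have z: "0 \<in> C" using sub by (rule bv.subspace_0)
  have add: "x + y \<in> C" if "x \<in> C" "y \<in> C" for x y using sub that by (rule bv.subspace_add)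
  have card128: "128 \<le> card C" using card_subspace_ge[OF sub] dim by simp
  have wt54: "54 \<le> hamming_weight x" if "x \<in> C" "x \<noteq> 0" for x
    using wt_ge_min[OF md that(1) z that(2)] by (simp add: dist0)
  have orth: "even (card (supp x \<inter> supp y))" if "x \<in> C" "y \<in> C" for x y
  proof -
    have "y \<in> dual_code C" using C(2) that(2) by (auto simp: self_orthogonal_def)
    then have "bdot x y = 0" using that(1) by (auto simp: dual_code_def)
    then show ?thesis by (rule bdot_zero_even)
  qed
  have ev: "even (hamming_weight x)" if "x \<in> C" for x
    using orth[OF that that] by (simp add: wt_supp)
  define C0 where "C0 = {x \<in> C. 4 dvd hamming_weight x}"
  have cl: "x + y \<in> C0" if "x \<in> C0" "y \<in> C0" for x y
  proof -
    have "x \<in> C" "y \<in> C" "4 dvd hamming_weight x" "4 dvd hamming_weight y" using that by (auto simp: C0_def)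
    moreover have "even (card (supp x \<inter> supp y))" using orth calculation by blast
    ultimately have "4 dvd hamming_weight (x + y)" using ar1 wt_add[of x y] by blast
    then show ?thesis using add \<open>x \<in> C\<close> \<open>y \<in> C\<close> by (auto simp: C0_def)
  qed
  have z0: "0 \<in> C0" using z by (simp add: C0_def hamming_weight_def)
  have cardC0: "card C \<le> 2 * card C0"
  proof (cases "C0 = C")
    case True then show ?thesis by simp
  next
    case False
    then obtain x0 where x0: "x0 \<in> C" "x0 \<notin> C0" by (auto simp: C0_def)
    have inj: "inj_on (\<lambda>c. c + x0) (C - C0)" by (rule inj_onI) simp
    have img: "(\<lambda>c. c + x0) ` (C - C0) \<subseteq> C0"
    proof
      fix w assume "w \<in> (\<lambda>c. c + x0) ` (C - C0)"
      then obtain x where x: "x \<in> C" "x \<notin> C0" "w = x + x0" by auto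
      have "\<not> 4 dvd hamming_weight x" "\<not> 4 dvd hamming_weight x0" using x x0 by (auto simp: C0_def)
      moreover have "even (hamming_weight x)" "even (hamming_weight x0)" using ev x x0 by auto
      moreover have "even (card (supp x \<inter> supp x0))" using orth x x0 by blast
      ultimately have "4 dvd hamming_weight (x + x0)" using ar2 wt_add[of x x0] by blast
      then show "w \<in> C0" using add x x0 by (auto simp: C0_def)
    qed
    have "card (C - C0) \<le> card C0" by (rule card_inj_on_le[OF inj img]) simp
    moreover have "card (C - C0) = card C - card C0" by (rule card_Diff_subset) (auto simp: C0_def)
    ultimately show ?thesis by linarith
  qed
  have wt56: "56 \<le> hamming_weight x" if "x \<in> C0" "x \<noteq> 0" for x
  proof -
    have "54 \<le> hamming_weight x" "4 dvd hamming_weight x" using wt54 that by (auto simp: C0_def)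
    then show ?thesis by (rule ar3)
  qed
  have "(\<Sum>c\<in>C0 - {0}. 56) \<le> (\<Sum>c\<in>C0 - {0}. hamming_weight c)"
    by (rule sum_mono) (use wt56 in auto)
  also have "\<dots> \<le> (\<Sum>c\<in>C0. hamming_weight c)" by (rule sum_mono2) auto
  finally have lb: "56 * (card C0 - 1) \<le> (\<Sum>c\<in>C0. hamming_weight c)" using z0 by simp
  have ub: "2 * (\<Sum>c\<in>C0. hamming_weight c) \<le> 110 * card C0"
    using sum_wt_bound[of C0] cl by simp
  from ar4[OF lb ub card128 cardC0] show False .
qed

end
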